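(* For every integer $n\ge 0$, \[ \int_{0}^{1}\frac{1-x}{x}\,{}_{H}w_{n+1}(-x)\,dx=(-1)^{n}\frac{n-1}{2}B_{n}. \] Moreover, for integers $n\ge 0$, $m\ge 1$ with $n+m$ even, \[ \int_{0}^{1}\frac{1-x}{x}\,{}_{H}w_{n+1}(-x)\,w_{m}(-x)\,dx=(-1)^{n}\frac{n}{2}B_{n+m}. \]
   Context: $\genfrac{\{}{\}}{0pt}{}{n}{k}$ denotes the Stirling numbers of the second kind. The geometric polynomials are $w_n(x)=\sum_{k=0}^{n}\genfrac{\{}{\}}{0pt}{}{n}{k}k!\,x^k$. With $H_k=\sum_{i=1}^k 1/i$, the harmonic geometric polynomials are ${}_{H}w_n(x)=\sum_{k=1}^{n}\genfrac{\{}{\}}{0pt}{}{n}{k}k!\,H_k\,x^k$. $B_n$ are the Bernoulli numbers, $\sum_{n\ge0}B_n t^n/n!=t/(e^t-1)$ (so $B_1=-1/2$). *)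

theory Defs
  imports "HOL-Analysis.Analysis" "HOL-Combinatorics.Stirling"
    "HOL-Computational_Algebra.Formal_Power_Series"
begin

definition geom_poly :: "nat \<Rightarrow> real \<Rightarrow> real" where
  "geom_poly n x = (\<Sum>k=0..n. real (Stirling n k) * fact k * x ^ k)"

definition harm_geom_poly :: "nat \<Rightarrow> real \<Rightarrow> real" where
  "harm_geom_poly n x = (\<Sum>k=1..n. real (Stirling n k) * fact k * harm k * x ^ k)"

text \<open>Bernoulli numbers via the exponential generating function t/(e^t - 1), so B_1 = -1/2.\<close>
definition bernoulli_num :: "nat \<Rightarrow> real" where
  "bernoulli_num n = fact n * fps_nth (fps_X / (fps_exp 1 - 1)) n"

end

theory Submission
  imports Defs
begin


definition U :: "real fps" where "U = fps_exp 1 - 1"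

lemma U0 [simp]: "fps_nth U 0 = 0" by (simp add: U_def)
lemma deriv_U: "fps_deriv U = 1 + U" by (simp add: U_def)

lemma fps_nth_Suc_deriv: "fps_nth f (Suc n) = fps_nth (fps_deriv f) n / of_nat (Suc n)"
  for f :: "real fps"
  by (simp add: field_simps)

lemma U_pow_nth: "fps_nth (U ^ k) n = real (Stirling n k) * fact k / fact n"
proof (induction n arbitrary: k)
  case 0
  then show ?case by (cases k) (auto simp: fps_nth_power_0)
next
  case (Suc n)
  show ?case
  proof (cases k)
    case 0
    then show ?thesis by simp
  next
    case (Suc j)
    have d: "fps_deriv (U ^ k) = of_nat (Suc j) * (U ^ j + U ^ Suc j)"
    proof -
      have "fps_deriv (U ^ Suc j) = of_nat (Suc j) * fps_deriv U * U ^ j"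
        by (metis diff_Suc_1 fps_deriv_power')
      then show ?thesis using Suc by (simp add: deriv_U distrib_left distrib_right mult.commute)
    qed
    have "fps_nth (U ^ k) (Suc n) = of_nat (Suc j) * (fps_nth (U^j) n + fps_nth (U^Suc j) n) / of_nat (Suc n)"
      by (simp only: fps_nth_Suc_deriv d fps_mult_left_const_nth fps_add_nth fps_of_nat[symmetric])
    also have "\<dots> = of_nat (Suc j) * (real (Stirling n j) * fact j / fact n + real (Stirling n (Suc j)) * fact (Suc j) / fact n) / of_nat (Suc n)"
      by (simp only: Suc.IH)
    also have "\<dots> = real (Stirling (Suc n) k) * fact k / fact (Suc n)"
      using Suc by (simp add: field_simps fact_Suc)
    finally show ?thesis .
  qed
qed

abbreviation V where "V \<equiv> - U"

lemma V_pow_nth: "fps_nth (V ^ k) n = (-1)^k * (real (Stirling n k) * fact k / fact n)"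
proof -
  have m1: "(-1 :: real fps) ^ k = fps_const ((-1)^k)" for k
  proof -
    have "(-1::real fps) = fps_const (-1)" by simp
    then show ?thesis by (simp only: fps_const_power)
  qed
  have "V ^ k = fps_const ((-1)^k) * U ^ k"
    by (simp only: power_minus[of U] m1)
  then show ?thesis by (simp add: U_pow_nth)
qed

lemma comp_V_nth: "fact N * fps_nth (a oo V) N = (\<Sum>i=0..N. fps_nth a i * (-1)^i * real (Stirling N i) * fact i)"
  by (simp add: fps_compose_nth V_pow_nth sum_distrib_left) (simp add: mult.assoc)

lemma V0 [simp]: "fps_nth V 0 = 0" by simp
lemma U_ne0: "U \<noteq> 0"
proof
  assume "U = 0"
  then have "fps_nth U 1 = 0" by simp
  then show False by (simp add: U_def)
qed

definition BB :: "real fps" where "BB = fps_X / (fps_exp 1 - 1)"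

lemma bern_BB: "bernoulli_num n = fact n * fps_nth BB n"
  by (simp add: bernoulli_num_def BB_def)

lemma U_BB: "U * BB = fps_X"
proof -
  have "subdegree U \<le> 1" by (rule subdegree_leI) (simp add: U_def)
  then have "fps_X / U * U = fps_X"
    using U_ne0 by (intro fps_times_divide_eq) auto
  then show ?thesis by (simp add: BB_def U_def mult.commute)
qed

lemma U_cancel: "U * a = U * b \<Longrightarrow> a = b"
  using U_ne0 by simp

definition Lser :: "real fps" where "Lser = Abs_fps (\<lambda>k. 1 / of_nat k)"

lemma one_minus_X_comp: "(1 - fps_X) oo V = 1 + U"
  by (simp add: fps_compose_sub_distrib)

lemma Lser_deriv: "fps_deriv Lser * (1 - fps_X) = 1"
proof -
  have "fps_deriv Lser = Abs_fps (\<lambda>_. 1)"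
    by (rule fps_ext) (simp add: Lser_def del: of_nat_Suc)
  then show ?thesis
    by (intro fps_ext) (simp add: algebra_simps fps_sub_nth)
qed

lemma Lser_comp: "Lser oo V = - fps_X"
proof -
  have d: "fps_deriv (Lser oo V) = - ((fps_deriv Lser oo V) * (1 + U))"
    by (simp add: fps_compose_deriv deriv_U ring_distribs)
  moreover have "(fps_deriv Lser oo V) * (1 + U) = 1"
    using arg_cong[OF Lser_deriv, of "\<lambda>f. f oo V"]
    by (simp add: fps_compose_mult_distrib one_minus_X_comp)
  ultimately have "fps_deriv (Lser oo V) = fps_deriv (- fps_X)"
    by (simp only: mult_minus_left[symmetric]) simp
  then have "Lser oo V = fps_const (fps_nth (Lser oo V) 0 - fps_nth (- fps_X) 0) + (- fps_X)"
    by (simp only: fps_deriv_eq_iff)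
  moreover have "fps_nth (Lser oo V) 0 = 0" by (simp add: Lser_def)
  ultimately show ?thesis by simp
qed

definition Cc :: "real fps" where "Cc = Abs_fps (\<lambda>k. 1 / (of_nat k + 1))"

lemma Cc_comp: "Cc oo V = BB"
proof -
  have XC: "fps_X * Cc = Lser"
    by (rule fps_ext) (simp add: Cc_def Lser_def of_nat_diff)
  have "V * (Cc oo V) = - fps_X"
    using arg_cong[OF XC, of "\<lambda>f. f oo V"]
    by (simp add: fps_compose_mult_distrib Lser_comp)
  then have "- (U * (Cc oo V)) = - fps_X" by (simp only: mult_minus_left)
  then have "U * (Cc oo V) = U * BB" by (simp only: U_BB neg_equal_iff_equal)
  then show ?thesis by (rule U_cancel)
qed

lemma G1: "(\<Sum>i=0..N. real (Stirling N i) * fact i * (-1)^i / (real i + 1)) = bernoulli_num N"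
proof -
  have "bernoulli_num N = fact N * fps_nth (Cc oo V) N" by (simp add: Cc_comp bern_BB)
  also have "\<dots> = (\<Sum>i=0..N. real (Stirling N i) * fact i * (-1)^i / (real i + 1))"
    unfolding comp_V_nth by (intro sum.cong) (auto simp: Cc_def)
  finally show ?thesis ..
qed

definition Hs :: "real fps" where "Hs = Abs_fps harm"
definition Dser :: "real fps" where "Dser = Abs_fps (\<lambda>k. harm k / (of_nat k + 1))"

lemma harm0 [simp]: "harm 0 = (0::real)" by (simp add: harm_def)

lemma Hs_Lser: "(1 - fps_X) * Hs = Lser"
proof (rule fps_ext)
  fix n
  show "fps_nth ((1 - fps_X) * Hs) n = fps_nth Lser n"
  proof (cases n)
    case 0 then show ?thesis by (simp add: Hs_def Lser_def algebra_simps)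
  next
    case (Suc m) then show ?thesis
      by (simp add: Hs_def Lser_def algebra_simps harm_Suc divide_inverse del: of_nat_Suc)
  qed
qed

lemma Dser_comp: "Dser oo V = - (fps_const (1/2) * fps_X * BB)"
proof -
  define M where "M = fps_X * Dser"
  have dM: "fps_deriv M = Hs"
  proof (rule fps_ext)
    fix n
    have a: "fps_nth (fps_deriv M) n = of_nat (n+1) * fps_nth M (n+1)" by (rule fps_deriv_nth)
    have b: "fps_nth M (n+1) = harm n / (real n + 1)" by (simp add: M_def Dser_def)
    have c: "(of_nat (n+1) :: real) = real n + 1" by simp
    have "fps_nth (fps_deriv M) n = (real n + 1) * (harm n / (real n + 1))"
      using a b c by (simp only:)
    moreover have "(real n + 1) * (harm n / (real n + 1)) = harm n"
    proof -
      have "real n + 1 > 0" by simp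
      then show ?thesis by (simp only: times_divide_eq_right nonzero_mult_div_cancel_left less_irrefl)
    qed
    ultimately show "fps_nth (fps_deriv M) n = fps_nth Hs n"
      by (simp add: Hs_def)
  qed
  have d: "fps_deriv (M oo V) = - ((Hs oo V) * (1 + U))"
    by (simp add: fps_compose_deriv deriv_U ring_distribs dM)
  have "(Hs oo V) * (1 + U) = Lser oo V"
    using arg_cong[OF Hs_Lser, of "\<lambda>f. f oo V"]
    by (simp add: fps_compose_mult_distrib one_minus_X_comp mult.commute)
  moreover have "fps_deriv (fps_const (1/2) * fps_X^2) = (fps_X :: real fps)"
    by (simp add: fps_deriv_power' fps_numeral_nth)
  ultimately have "fps_deriv (M oo V) = fps_deriv (fps_const (1/2) * fps_X ^ 2)"
    using d by (simp add: Lser_comp)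
  then have "M oo V = fps_const (fps_nth (M oo V) 0 - fps_nth (fps_const (1/2) * fps_X ^ 2) 0) + fps_const (1/2) * fps_X ^ 2"
    by (simp only: fps_deriv_eq_iff)
  moreover have "fps_nth (M oo V) 0 = 0" by (simp add: M_def)
  ultimately have MV: "M oo V = fps_const (1/2) * fps_X ^ 2" by simp
  have "M oo V = V * (Dser oo V)"
    by (simp add: M_def fps_compose_mult_distrib)
  with MV have e0: "- (U * (Dser oo V)) = fps_const (1/2) * fps_X * (U * BB)"
    by (simp add: U_BB power2_eq_square)
  have e: "U * (Dser oo V) = - (fps_const (1/2) * fps_X * (U * BB))"
    using e0 by (metis minus_minus)
  have "U * (Dser oo V) = U * (- (fps_const (1/2) * fps_X * BB))"
    by (simp only: e) (simp add: algebra_simps)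
  then show ?thesis by (rule U_cancel)
qed

lemma G2: "(\<Sum>i=0..Suc n. real (Stirling (Suc n) i) * fact i * (-1)^i * harm i / (real i + 1)) = - (real (Suc n) / 2) * bernoulli_num n"
proof -
  have "fact (Suc n) * fps_nth (Dser oo V) (Suc n) = - (real (Suc n) / 2) * bernoulli_num n"
    by (simp add: Dser_comp bern_BB mult.assoc del: of_nat_Suc)
  moreover have "fact (Suc n) * fps_nth (Dser oo V) (Suc n) = (\<Sum>i=0..Suc n. real (Stirling (Suc n) i) * fact i * (-1)^i * harm i / (real i + 1))"
    unfolding comp_V_nth by (intro sum.cong) (auto simp: Dser_def)
  ultimately show ?thesis by simp
qed

definition Eser :: "real fps" where "Eser = Abs_fps (\<lambda>k. harm k / (of_nat k * (of_nat k + 1)))"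

lemma G3: "(\<Sum>i=0..Suc n. real (Stirling (Suc n) i) * fact i * (-1)^i * harm i / (real i * (real i + 1))) = ((real n - 1) / 2) * bernoulli_num n"
proof -
  have XE: "fps_X * fps_deriv Eser = Dser"
  proof (rule fps_ext)
    fix k show "fps_nth (fps_X * fps_deriv Eser) k = fps_nth Dser k"
      by (cases k) (simp_all add: Eser_def Dser_def del: of_nat_Suc)
  qed
  have d: "fps_deriv (Eser oo V) = - ((fps_deriv Eser oo V) * (1 + U))"
    by (simp add: fps_compose_deriv deriv_U ring_distribs)
  have DV: "Dser oo V = - (U * (fps_deriv Eser oo V))"
    using arg_cong[OF XE, of "\<lambda>f. f oo V"]
    by (simp add: fps_compose_mult_distrib)
  have dB: "(1 + U) * BB + U * fps_deriv BB = 1"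
  proof -
    have "fps_deriv (U * BB) = fps_deriv fps_X" by (simp add: U_BB)
    then show ?thesis by (simp add: deriv_U add.commute)
  qed
  define c :: "real fps" where "c = fps_const (1/2)"
  have "U * fps_deriv (Eser oo V) = (1 + U) * (Dser oo V)"
    by (simp add: d DV algebra_simps)
  also have "\<dots> = - (c * (1 + U) * fps_X * BB)"
    by (simp add: Dser_comp c_def algebra_simps)
  also have "\<dots> = c * (fps_X * (1 - (1 + U) * BB) - fps_X)"
    by (simp add: algebra_simps)
  also have "\<dots> = c * (fps_X * (U * fps_deriv BB) - U * BB)"
  proof -
    have h: "U * fps_deriv BB = 1 - (1 + U) * BB" using dB by (simp add: algebra_simps)
    show ?thesis by (simp only: h U_BB)
  qed
  also have "\<dots> = U * (c * (fps_X * fps_deriv BB - BB))"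
    by (simp add: algebra_simps)
  finally have eq: "fps_deriv (Eser oo V) = c * (fps_X * fps_deriv BB - BB)"
    by (rule U_cancel)
  have "fps_nth (fps_deriv (Eser oo V)) n = (real n - 1) / 2 * fps_nth BB n"
    unfolding eq c_def by (cases n) (simp_all add: algebra_simps del: of_nat_Suc)
  then have h: "real (Suc n) * fps_nth (Eser oo V) (Suc n) = (real n - 1) / 2 * fps_nth BB n"
    by (simp del: of_nat_Suc)
  have "fact (Suc n) * fps_nth (Eser oo V) (Suc n) = fact n * (real (Suc n) * fps_nth (Eser oo V) (Suc n))"
    by (simp only: fact_Suc of_nat_mult) (simp add: mult_ac)
  then have "fact (Suc n) * fps_nth (Eser oo V) (Suc n) = ((real n - 1) / 2) * bernoulli_num n"
    by (simp only: h bern_BB) (simp add: mult_ac)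
  moreover have "fact (Suc n) * fps_nth (Eser oo V) (Suc n) = (\<Sum>i=0..Suc n. real (Stirling (Suc n) i) * fact i * (-1)^i * harm i / (real i * (real i + 1)))"
    unfolding comp_V_nth by (intro sum.cong) (auto simp: Eser_def)
  ultimately show ?thesis by simp
qed


definition TP :: "(nat \<Rightarrow> real) \<Rightarrow> nat \<Rightarrow> real \<Rightarrow> real" where
  "TP f a y = (\<Sum>k=0..a. real (Stirling a k) * fact k * f k * y ^ k)"
definition TPd :: "(nat \<Rightarrow> real) \<Rightarrow> nat \<Rightarrow> real \<Rightarrow> real" where
  "TPd f a y = (\<Sum>k=0..a. real (Stirling a k) * fact k * f k * (of_nat k * y ^ (k - 1)))"
definition extT :: "(nat \<Rightarrow> real) \<Rightarrow> nat \<Rightarrow> real \<Rightarrow> real" where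
  "extT f a y = (\<Sum>k=0..a. real (Stirling a k) * fact (Suc k) * (f (Suc k) - f k) * y ^ k)"

lemma TP_deriv: "(TP f a has_real_derivative TPd f a y) (at y)"
  unfolding TP_def TPd_def
  by (auto intro!: derivative_eq_intros sum.cong simp: mult_ac)

lemma TP_cont [continuous_intros]: "continuous_on S g \<Longrightarrow> continuous_on S (\<lambda>x. TP f a (g x))"
  unfolding TP_def by (intro continuous_intros)

lemma geom_TP: "geom_poly a y = TP (\<lambda>_. 1) a y"
  by (simp add: geom_poly_def TP_def)

lemma harm_TP: "harm_geom_poly a y = TP harm a y"
proof -
  have "TP harm a y = (\<Sum>k\<in>insert 0 {1..a}. real (Stirling a k) * fact k * harm k * y ^ k)"
    unfolding TP_def by (intro sum.cong) auto
  also have "\<dots> = harm_geom_poly a y"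
    by (subst sum.insert) (auto simp: harm_geom_poly_def harm_def)
  finally show ?thesis ..
qed

lemma TP_rec: "TP f (Suc a) y = y * ((1 + y) * TPd f a y + TP f a y) + y * extT f a y"
proof -
  define A where "A = (\<Sum>k=0..a. of_nat k * real (Stirling a k) * fact k * f k * y ^ k)"
  define B where "B = (\<Sum>k=0..a. real (Stirling a k) * fact (Suc k) * f (Suc k) * y ^ Suc k)"
  have A': "A = (\<Sum>k=0..Suc a. of_nat k * real (Stirling a k) * fact k * f k * y ^ k)"
    unfolding A_def by (simp add: sum.atLeast0_atMost_Suc)
  have "TP f (Suc a) y = (\<Sum>i=0..a. real (Stirling (Suc a) (Suc i)) * fact (Suc i) * f (Suc i) * y ^ Suc i)"
    unfolding TP_def by (subst sum.atLeast0_atMost_Suc_shift) simp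
  also have "\<dots> = (\<Sum>i=0..a. of_nat (Suc i) * real (Stirling a (Suc i)) * fact (Suc i) * f (Suc i) * y ^ Suc i)
                + B"
    unfolding B_def sum.distrib[symmetric] by (intro sum.cong) (simp_all add: algebra_simps)
  also have "(\<Sum>i=0..a. of_nat (Suc i) * real (Stirling a (Suc i)) * fact (Suc i) * f (Suc i) * y ^ Suc i) = A"
    unfolding A' by (subst sum.atLeast0_atMost_Suc_shift) simp
  finally have L: "TP f (Suc a) y = A + B" .
  have "y * ((1 + y) * TPd f a y + TP f a y) + y * extT f a y
      = (\<Sum>k=0..a. y * ((1 + y) * (real (Stirling a k) * fact k * f k * (of_nat k * y ^ (k - 1))) + real (Stirling a k) * fact k * f k * y ^ k) + y * (real (Stirling a k) * fact (Suc k) * (f (Suc k) - f k) * y ^ k))"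
    unfolding TPd_def TP_def extT_def by (simp only: sum_distrib_left distrib_left sum.distrib add.assoc)
  also have "\<dots> = A + B"
    unfolding A_def B_def sum.distrib[symmetric]
  proof (intro sum.cong refl)
    fix k
    have yk: "y * (of_nat k * y ^ (k - 1)) = of_nat k * y ^ k"
      by (cases k) auto
    show "y * ((1 + y) * (real (Stirling a k) * fact k * f k * (of_nat k * y ^ (k - 1))) + real (Stirling a k) * fact k * f k * y ^ k) + y * (real (Stirling a k) * fact (Suc k) * (f (Suc k) - f k) * y ^ k)
        = of_nat k * real (Stirling a k) * fact k * f k * y ^ k + real (Stirling a k) * fact (Suc k) * f (Suc k) * y ^ Suc k"
    proof -
      have e1: "y * ((1 + y) * (real (Stirling a k) * fact k * f k * (of_nat k * y ^ (k - 1))))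
          = (1 + y) * (real (Stirling a k) * fact k * f k) * (y * (of_nat k * y ^ (k - 1)))"
        by (simp add: algebra_simps)
      show ?thesis
        unfolding distrib_left[of y] e1 yk
        by (simp add: algebra_simps fact_Suc)
    qed
  qed
  finally show ?thesis using L by simp
qed

lemma ext_one: "extT (\<lambda>_. 1) a y = 0"
  by (simp add: extT_def)

lemma ext_harm: "extT harm a y = geom_poly a y"
  unfolding extT_def geom_poly_def
  by (intro sum.cong refl) (simp add: harm_Suc fact_Suc field_simps del: of_nat_Suc)


lemma TP_chain [derivative_intros]:
  "(g has_real_derivative g') (at x) \<Longrightarrow> D = TPd f a (g x) * g' \<Longrightarrow> ((\<lambda>x. TP f a (g x)) has_real_derivative D) (at x)"
  using DERIV_chain2[OF TP_deriv] by blast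

lemma TP0 [simp]: "TP f 0 y = f 0" by (simp add: TP_def)
lemma TP1 [simp]: "TP (\<lambda>_. 1) (Suc 0) y = y" by (simp add: TP_def)

lemma dA: "((\<lambda>x. (1 - x) * TP f a (-x)) has_real_derivative (- (TP f a (-x) + (1 - x) * TPd f a (-x)))) (at x)"
  by (rule derivative_eq_intros refl)+ (simp add: algebra_simps)

lemma xdA: "x * (- (TP f a (-x) + (1 - x) * TPd f a (-x))) = TP f (Suc a) (-x) + x * extT f a (-x)"
  using TP_rec[of f a "-x"] by (simp add: algebra_simps)

lemma dB: "((\<lambda>x. x * TP f b (x - 1)) has_real_derivative (TP f b (x - 1) + x * TPd f b (x - 1))) (at x)"
  by (rule derivative_eq_intros refl)+ (simp add: algebra_simps)

lemma xdB: "(x - 1) * (TP f b (x - 1) + x * TPd f b (x - 1)) = TP f (Suc b) (x - 1) - (x - 1) * extT f b (x - 1)"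
  using TP_rec[of f b "x - 1"] by (simp add: algebra_simps)

lemma ibp:
  fixes F g h :: "real \<Rightarrow> real"
  assumes "\<And>x. (F has_real_derivative (g x - h x)) (at x)" "F 0 = F 1"
    "continuous_on {0..1} g" "continuous_on {0..1} h"
  shows "integral {0..1} g = integral {0..1} h"
proof -
  have "((\<lambda>x. g x - h x) has_integral (F 1 - F 0)) {0..1}"
    by (rule fundamental_theorem_of_calculus)
       (auto simp: has_real_derivative_iff_has_vector_derivative[symmetric] intro: DERIV_subset assms(1))
  then have "integral {0..1} (\<lambda>x. g x - h x) = 0" using assms(2) by (simp add: integral_unique)
  moreover have "integral {0..1} (\<lambda>x. g x - h x) = integral {0..1} g - integral {0..1} h"
    by (intro integral_diff integrable_continuous_interval assms)
  ultimately show ?thesis by simp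
qed

lemma refl01:
  fixes f :: "real \<Rightarrow> real"
  assumes "continuous_on {0..1} f"
  shows "integral {0..1} (\<lambda>x. f (1 - x)) = integral {0..1} f"
proof -
  have i: "(f has_integral integral {0..1} f) (cbox 0 1)"
    using integrable_continuous_interval[OF assms] by (simp add: has_integral_integral)
  have img: "(\<lambda>x. (1 / (-1)) *\<^sub>R x + - ((1 / (-1)) *\<^sub>R (1::real))) ` cbox 0 1 = {0..1}"
  proof -
    have "(\<lambda>x::real. 1 - x) ` {0..1} = {0..1}"
      by (auto simp: image_iff intro!: bexI[of _ "1 - x" for x])
    then show ?thesis by simp
  qed
  have "((\<lambda>x. f ((-1) *\<^sub>R x + 1)) has_integral (1 / (\<bar>-1\<bar> ^ DIM(real))) *\<^sub>R integral {0..1} f) {0..1}"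
    using has_integral_affinity[OF i, of "-1" 1] img by simp
  then show ?thesis by (simp add: integral_unique)
qed

abbreviation W where "W a x \<equiv> TP (\<lambda>_. 1) a (-x)"
abbreviation M where "M b x \<equiv> TP (\<lambda>_. 1) b (x - 1)"
abbreviation H where "H a x \<equiv> TP harm a (-x)"

lemma R1: "x * M (Suc k) x = (-1)^k * ((1 - x) * W (Suc k) x)"
proof (induction k arbitrary: x)
  case 0
  then show ?case by (simp add: algebra_simps)
next
  case (Suc k)
  define s :: real where "s = (-1)^k"
  have fe: "(\<lambda>x. x * M (Suc k) x) = (\<lambda>x. s * ((1 - x) * W (Suc k) x))"
    using Suc.IH s_def by auto
  have d1: "((\<lambda>x. x * M (Suc k) x) has_real_derivative (s * (- (W (Suc k) x + (1 - x) * TPd (\<lambda>_. 1) (Suc k) (-x))))) (at x)"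
    unfolding fe by (intro DERIV_cmult dA)
  have dd: "M (Suc k) x + x * TPd (\<lambda>_. 1) (Suc k) (x - 1) = s * (- (W (Suc k) x + (1 - x) * TPd (\<lambda>_. 1) (Suc k) (-x)))"
    using DERIV_unique[OF dB d1] .
  have "x * M (Suc (Suc k)) x = x * ((x - 1) * (M (Suc k) x + x * TPd (\<lambda>_. 1) (Suc k) (x - 1)))"
    using xdB[of x "\<lambda>_. 1" "Suc k"] by (simp add: ext_one)
  also have "\<dots> = s * (x - 1) * (x * (- (W (Suc k) x + (1 - x) * TPd (\<lambda>_. 1) (Suc k) (-x))))"
    unfolding dd by (simp add: algebra_simps)
  also have "\<dots> = s * (x - 1) * W (Suc (Suc k)) x"
    using xdA[of x "\<lambda>_. 1" "Suc k"] by (simp add: ext_one)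
  also have "\<dots> = (-1) ^ Suc k * ((1 - x) * W (Suc (Suc k)) x)"
    by (simp add: s_def algebra_simps)
  finally show ?case .
qed


lemma ftc01:
  fixes F f :: "real \<Rightarrow> real"
  assumes "\<And>x. (F has_real_derivative f x) (at x)"
  shows "(f has_integral (F 1 - F 0)) {0..1}"
  by (rule fundamental_theorem_of_calculus)
     (auto simp: has_real_derivative_iff_has_vector_derivative[symmetric] intro: DERIV_subset assms)

lemma mono_int: "((\<lambda>x::real. x ^ k) has_integral (1 / (real k + 1))) {0..1}"
proof -
  have "((\<lambda>x::real. x ^ k) has_integral ((\<lambda>x. x ^ Suc k / (real k + 1)) 1 - (\<lambda>x. x ^ Suc k / (real k + 1)) 0)) {0..1}"
  proof (rule ftc01)
    fix x :: real
    show "((\<lambda>x. x ^ Suc k / (real k + 1)) has_real_derivative x ^ k) (at x)"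
      using DERIV_cdivide[OF DERIV_pow[of "Suc k" x], of "real k + 1"]
      by (rule DERIV_cong) (simp add: field_simps)
  qed
  then show ?thesis by simp
qed

lemma int_TP: "((\<lambda>x. TP f N (-x)) has_integral (\<Sum>k=0..N. real (Stirling N k) * fact k * f k * (-1)^k / (real k + 1))) {0..1}"
proof -
  have e: "(\<lambda>x. TP f N (-x)) = (\<lambda>x. \<Sum>k=0..N. (real (Stirling N k) * fact k * f k * (-1)^k) * x^k)"
  proof
    fix x :: real
    show "TP f N (-x) = (\<Sum>k=0..N. (real (Stirling N k) * fact k * f k * (-1)^k) * x^k)"
      by (simp add: TP_def power_minus[of x] mult_ac)
  qed
  have "((\<lambda>x. \<Sum>k=0..N. (real (Stirling N k) * fact k * f k * (-1)^k) * x^k) has_integral (\<Sum>k=0..N. (real (Stirling N k) * fact k * f k * (-1)^k) * (1 / (real k + 1)))) {0..1}"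
    by (intro has_integral_sum has_integral_mult_right mono_int) auto
  then show ?thesis unfolding e by simp
qed

lemma int_W: "integral {0..1} (\<lambda>x. W N x) = bernoulli_num N"
  using int_TP[of "\<lambda>_. 1" N] G1[of N] by (simp add: integral_unique)

lemma int_H: "integral {0..1} (\<lambda>x. H (Suc n) x) = - (real (Suc n) / 2) * bernoulli_num n"
proof -
  have "integral {0..1} (\<lambda>x. H (Suc n) x) = (\<Sum>k=0..Suc n. real (Stirling (Suc n) k) * fact k * harm k * (-1)^k / (real k + 1))"
    using int_TP[of harm "Suc n"] by (simp add: integral_unique)
  also have "\<dots> = (\<Sum>i=0..Suc n. real (Stirling (Suc n) i) * fact i * (-1)^i * harm i / (real i + 1))"
    by (intro sum.cong refl) (simp add: mult_ac)
  finally show ?thesis using G2[of n] by simp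
qed

lemma int_I1: "((\<lambda>x. (1 - x) / x * TP harm (Suc n) (-x)) has_integral
    (\<Sum>k=0..Suc n. real (Stirling (Suc n) k) * fact k * (-1)^k * harm k / (real k * (real k + 1)))) {0..1}"
proof -
  define c where "c k = real (Stirling (Suc n) k) * fact k * harm k * (-1)^k" for k
  have c0: "c 0 = 0" by (simp add: c_def)
  have i: "((\<lambda>x. \<Sum>k=0..Suc n. c k * (x ^ (k - 1) - x ^ k)) has_integral (\<Sum>k=0..Suc n. c k * (1 / (real k * (real k + 1))))) {0..1}"
  proof (intro has_integral_sum has_integral_mult_right)
    fix k assume "k \<in> {0..Suc n}"
    show "((\<lambda>x. x ^ (k - 1) - x ^ k) has_integral 1 / (real k * (real k + 1))) {0..1}"
    proof (cases k)
      case 0 then show ?thesis by simp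
    next
      case (Suc j)
      have "((\<lambda>x. x ^ j - x ^ k) has_integral (1 / (real j + 1) - 1 / (real k + 1))) {0..1}"
        by (intro has_integral_diff mono_int)
      then have "((\<lambda>x. x ^ (k - 1) - x ^ k) has_integral (1 / (real j + 1) - 1 / (real k + 1))) {0..1}"
        using Suc by simp
      moreover have "1 / (real j + 1) - 1 / (real k + 1) = 1 / (real k * (real k + 1))"
        using Suc by (simp add: field_simps)
      ultimately show ?thesis by simp
    qed
  qed simp
  have eq: "(\<Sum>k=0..Suc n. c k * (x ^ (k - 1) - x ^ k)) = (1 - x) / x * TP harm (Suc n) (-x)"
    if "x \<in> {0..1} - {0}" for x
  proof -
    have x0: "x \<noteq> 0" using that by auto
    have "(1 - x) / x * TP harm (Suc n) (-x) = (\<Sum>k=0..Suc n. (1 - x) / x * (real (Stirling (Suc n) k) * fact k * harm k * (-x) ^ k))"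
      by (simp only: TP_def sum_distrib_left)
    also have "\<dots> = (\<Sum>k=0..Suc n. (1 - x) / x * (c k * x ^ k))"
      by (intro sum.cong refl) (simp add: c_def power_minus[of x] mult_ac)
    also have "\<dots> = (\<Sum>k=0..Suc n. c k * (x ^ (k - 1) - x ^ k))"
    proof (intro sum.cong refl)
      fix k show "(1 - x) / x * (c k * x ^ k) = c k * (x ^ (k - 1) - x ^ k)"
        using x0 c0 by (cases k) (auto simp: field_simps)
    qed
    finally show ?thesis by simp
  qed
  have "((\<lambda>x. (1 - x) / x * TP harm (Suc n) (-x)) has_integral (\<Sum>k=0..Suc n. c k * (1 / (real k * (real k + 1))))) {0..1}"
  proof -
    have "((\<lambda>x. \<Sum>k=0..Suc n. c k * (x ^ (k - 1) - x ^ k)) has_integral (\<Sum>k=0..Suc n. c k * (1 / (real k * (real k + 1))))) {0..1}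
      \<longleftrightarrow> ((\<lambda>x. (1 - x) / x * TP harm (Suc n) (-x)) has_integral (\<Sum>k=0..Suc n. c k * (1 / (real k * (real k + 1))))) {0..1}"
      by (intro has_integral_spike_finite_eq[of "{0}"]) (use eq in auto)
    with i show ?thesis by blast
  qed
  moreover have "(\<Sum>k=0..Suc n. c k * (1 / (real k * (real k + 1)))) = (\<Sum>k=0..Suc n. real (Stirling (Suc n) k) * fact k * (-1)^k * harm k / (real k * (real k + 1)))"
    by (intro sum.cong refl) (simp add: c_def)
  ultimately show ?thesis by simp
qed

lemma P_shift: "integral {0..1} (\<lambda>x. W (Suc a) x * M b x) = integral {0..1} (\<lambda>x. W a x * M (Suc b) x)"
proof (rule ibp[where F="\<lambda>x. (x * M b x) * ((1 - x) * W a x)"])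
  fix x :: real
  define D1 where "D1 = M b x + x * TPd (\<lambda>_. 1) b (x - 1)"
  define D2 where "D2 = - (W a x + (1 - x) * TPd (\<lambda>_. 1) a (-x))"
  have e1: "x * D2 = W (Suc a) x"
    using xdA[of x "\<lambda>_. 1" a] by (simp add: ext_one D2_def)
  have e2: "(x - 1) * D1 = M (Suc b) x"
    using xdB[of x "\<lambda>_. 1" b] by (simp add: ext_one D1_def)
  have "D1 * ((1 - x) * W a x) + D2 * (x * M b x) = M b x * (x * D2) - ((x - 1) * D1) * W a x"
    by (simp add: algebra_simps)
  also have "\<dots> = W (Suc a) x * M b x - W a x * M (Suc b) x"
    unfolding e1 e2 by (simp add: mult_ac)
  finally have eq: "D1 * ((1 - x) * W a x) + D2 * (x * M b x) = W (Suc a) x * M b x - W a x * M (Suc b) x" .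
  show "((\<lambda>x. (x * M b x) * ((1 - x) * W a x)) has_real_derivative (W (Suc a) x * M b x - W a x * M (Suc b) x)) (at x)"
    using DERIV_cong[OF DERIV_mult[OF dB[where f="\<lambda>_. 1" and b=b] dA[where f="\<lambda>_. 1" and a=a]] eq[unfolded D1_def D2_def]] .
qed (auto intro!: continuous_intros)

lemma M_W: "M b x = W b (1 - x)" by simp

lemma P_val: "integral {0..1} (\<lambda>x. W a x * M b x) = bernoulli_num (a + b)"
proof (induction a arbitrary: b)
  case 0
  have "integral {0..1} (\<lambda>x. W 0 x * M b x) = integral {0..1} (\<lambda>x. W b (1 - x))" by simp
  also have "\<dots> = integral {0..1} (\<lambda>x. W b x)"
    by (rule refl01[where f="\<lambda>x. W b x"]) (intro continuous_intros)
  finally show ?case using int_W by simp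
next
  case (Suc a)
  then show ?case using P_shift[of a b] by simp
qed

lemma XY: "integral {0..1} (\<lambda>x. x * W a x * M c x) + integral {0..1} (\<lambda>x. (1 - x) * W a x * M c x) = bernoulli_num (a + c)"
proof -
  have "integral {0..1} (\<lambda>x. x * W a x * M c x) + integral {0..1} (\<lambda>x. (1 - x) * W a x * M c x)
      = integral {0..1} (\<lambda>x. x * W a x * M c x + (1 - x) * W a x * M c x)"
    by (rule integral_add[symmetric]) (auto intro!: integrable_continuous_interval continuous_intros)
  also have "\<dots> = integral {0..1} (\<lambda>x. W a x * M c x)"
    by (simp add: algebra_simps)
  finally show ?thesis using P_val by simp
qed

lemma Yrefl: "integral {0..1} (\<lambda>x. (1 - x) * W a x * M c x) = integral {0..1} (\<lambda>x. x * M a x * W c x)"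
proof -
  have "integral {0..1} (\<lambda>x. x * M a x * W c x) = integral {0..1} (\<lambda>x. (\<lambda>x. (1 - x) * W a x * M c x) (1 - x))"
    by simp
  also have "\<dots> = integral {0..1} (\<lambda>x. (1 - x) * W a x * M c x)"
    by (rule refl01) (intro continuous_intros)
  finally show ?thesis ..
qed

lemma Y0: assumes "even a" "a \<ge> 2" shows "integral {0..1} (\<lambda>x. (1 - x) * W a x * M 0 x) = 0"
proof -
  obtain a' where a': "a = Suc a'" "odd a'" using assms by (cases a) auto
  have "integral {0..1} (\<lambda>x. (1 - x) * W a x * M 0 x) = integral {0..1} (\<lambda>x. x * M a x * W 0 x)"
    by (rule Yrefl)
  also have "\<dots> = integral {0..1} (\<lambda>x. - ((1 - x) * W a x * M 0 x))"
    using R1[of _ a'] a' by simp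
  also have "\<dots> = - integral {0..1} (\<lambda>x. (1 - x) * W a x * M 0 x)"
    by (rule integral_neg)
  finally show ?thesis by simp
qed

lemma X0: assumes "even a" "a \<ge> 2" shows "integral {0..1} (\<lambda>x. x * W a x * M 0 x) = bernoulli_num a"
  using XY[of a 0] Y0[OF assms] by simp

lemma Xeven: assumes "a \<ge> 1" "c \<ge> 1" "even (a + c)"
  shows "integral {0..1} (\<lambda>x. x * W a x * M c x) = bernoulli_num (a + c) / 2"
proof -
  obtain a' c' where ac: "a = Suc a'" "c = Suc c'" using assms by (cases a; cases c) auto
  have s: "((-1::real) ^ a') = (-1) ^ c'" using assms(3) ac by (simp add: minus_one_power_iff)
  have fe: "(\<lambda>x. x * M a x * W c x) = (\<lambda>x. x * W a x * M c x)"
  proof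
    fix x :: real
    have "x * M a x * W c x = (-1)^a' * ((1 - x) * W a x) * W c x" using R1[of x a'] ac by simp
    also have "\<dots> = W a x * ((-1)^c' * ((1 - x) * W c x))" using s by (simp add: mult_ac)
    also have "\<dots> = x * W a x * M c x" using R1[of x c'] ac by (simp add: mult_ac)
    finally show "x * M a x * W c x = x * W a x * M c x" .
  qed
  have "integral {0..1} (\<lambda>x. (1 - x) * W a x * M c x) = integral {0..1} (\<lambda>x. x * W a x * M c x)"
    using Yrefl[of a c] unfolding fe .
  then show ?thesis using XY[of a c] by linarith
qed

lemma B_odd: assumes "odd N" "N \<ge> 3" shows "bernoulli_num N = 0"
proof -
  obtain k where k: "N = Suc k" "even k" "k \<ge> 2" using assms by (cases N) auto
  have "bernoulli_num N = integral {0..1} (\<lambda>x. W 1 x * M k x)" using P_val[of 1 k] k by simp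
  also have "\<dots> = integral {0..1} (\<lambda>x. - (x * M k x * W 0 x))" by simp
  also have "\<dots> = - integral {0..1} (\<lambda>x. x * M k x * W 0 x)"
    by (rule integral_neg)
  also have "\<dots> = 0" using Yrefl[of k 0] Y0[of k] k by simp
  finally show ?thesis .
qed


lemma Q_shift: "integral {0..1} (\<lambda>x. H a x * M (Suc b) x) =
   integral {0..1} (\<lambda>x. H (Suc a) x * M b x) + integral {0..1} (\<lambda>x. x * W a x * M b x)"
proof -
  have "integral {0..1} (\<lambda>x. H a x * M (Suc b) x) = integral {0..1} (\<lambda>x. H (Suc a) x * M b x + x * W a x * M b x)"
  proof (rule ibp[where F="\<lambda>x. - (((1 - x) * H a x) * (x * M b x))"])
    fix x :: real
    define D1 where "D1 = M b x + x * TPd (\<lambda>_. 1) b (x - 1)"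
    define D2 where "D2 = - (H a x + (1 - x) * TPd harm a (-x))"
    have e1: "x * D2 = H (Suc a) x + x * W a x"
      using xdA[of x harm a] by (simp add: ext_harm geom_TP D2_def)
    have e2: "(x - 1) * D1 = M (Suc b) x"
      using xdB[of x "\<lambda>_. 1" b] by (simp add: ext_one D1_def)
    have "- (D2 * (x * M b x) + D1 * ((1 - x) * H a x)) = H a x * ((x - 1) * D1) - (x * D2) * M b x"
      by (simp add: algebra_simps)
    also have "\<dots> = H a x * M (Suc b) x - (H (Suc a) x * M b x + x * W a x * M b x)"
      unfolding e1 e2 by (simp add: algebra_simps)
    finally have eq: "- (D2 * (x * M b x) + D1 * ((1 - x) * H a x)) = H a x * M (Suc b) x - (H (Suc a) x * M b x + x * W a x * M b x)" .
    show "((\<lambda>x. - (((1 - x) * H a x) * (x * M b x))) has_real_derivative (H a x * M (Suc b) x - (H (Suc a) x * M b x + x * W a x * M b x))) (at x)"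
      using DERIV_cong[OF DERIV_minus[OF DERIV_mult[OF dA[where f=harm and a=a] dB[where f="\<lambda>_. 1" and b=b]]] eq[unfolded D1_def D2_def]] .
  qed (auto intro!: continuous_intros)
  also have "\<dots> = integral {0..1} (\<lambda>x. H (Suc a) x * M b x) + integral {0..1} (\<lambda>x. x * W a x * M b x)"
    by (rule integral_add) (auto intro!: integrable_continuous_interval continuous_intros)
  finally show ?thesis .
qed

lemma Q_iter: "integral {0..1} (\<lambda>x. H a x * M b x) =
   integral {0..1} (\<lambda>x. H (a + b) x * M 0 x) + (\<Sum>i<b. integral {0..1} (\<lambda>x. x * W (a + i) x * M (b - 1 - i) x))"
proof (induction b arbitrary: a)
  case 0
  then show ?case by simp
next
  case (Suc b)
  have "integral {0..1} (\<lambda>x. H a x * M (Suc b) x) =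
     integral {0..1} (\<lambda>x. H (Suc a) x * M b x) + integral {0..1} (\<lambda>x. x * W a x * M b x)"
    by (rule Q_shift)
  also have "\<dots> = integral {0..1} (\<lambda>x. H (Suc a + b) x * M 0 x) + (\<Sum>i<b. integral {0..1} (\<lambda>x. x * W (Suc a + i) x * M (b - 1 - i) x))
      + integral {0..1} (\<lambda>x. x * W a x * M b x)"
    using Suc.IH[of "Suc a"] by simp
  also have "\<dots> = integral {0..1} (\<lambda>x. H (a + Suc b) x * M 0 x) + (\<Sum>i<Suc b. integral {0..1} (\<lambda>x. x * W (a + i) x * M (Suc b - 1 - i) x))"
    by (subst sum.lessThan_Suc_shift) (simp add: add_ac)
  finally show ?case .
qed

theorem theorem4:
  shows "(\<forall>n::nat. ((\<lambda>x::real. (1 - x) / x * harm_geom_poly (n + 1) (- x))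
            has_integral ((-1) ^ n * ((real n - 1) / 2) * bernoulli_num n)) {0..1}) \<and>
    (\<forall>n m::nat. m \<ge> 1 \<longrightarrow> even (n + m) \<longrightarrow>
          ((\<lambda>x::real. (1 - x) / x * harm_geom_poly (n + 1) (- x) * geom_poly m (- x))
            has_integral ((-1) ^ n * (real n / 2) * bernoulli_num (n + m))) {0..1})"
proof (intro conjI allI impI)
  fix n :: nat
  have "((\<lambda>x::real. (1 - x) / x * harm_geom_poly (n + 1) (- x)) has_integral (((real n - 1) / 2) * bernoulli_num n)) {0..1}"
  proof -
    have h: "((\<lambda>x. (1 - x) / x * TP harm (Suc n) (-x)) has_integral (((real n - 1) / 2) * bernoulli_num n)) {0..1}"
      using int_I1[of n] unfolding G3[of n] .
    then show ?thesis by (simp only: harm_TP Suc_eq_plus1)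
  qed
  moreover have "((real n - 1) / 2) * bernoulli_num n = (-1) ^ n * ((real n - 1) / 2) * bernoulli_num n"
  proof (cases "even n")
    case True then show ?thesis by simp
  next
    case False
    show ?thesis
    proof (cases "n = 1")
      case True then show ?thesis by simp
    next
      case False
      with \<open>odd n\<close> have "n \<ge> 3" by presburger
      with \<open>odd n\<close> show ?thesis using B_odd by simp
    qed
  qed
  ultimately show "((\<lambda>x::real. (1 - x) / x * harm_geom_poly (n + 1) (- x))
            has_integral ((-1) ^ n * ((real n - 1) / 2) * bernoulli_num n)) {0..1}" by (simp only:)
next
  fix n m :: nat
  assume m1: "m \<ge> 1" and ev: "even (n + m)"
  obtain m' where m': "m = Suc m'" using m1 by (cases m) auto
  define N where "N = n + m"
  have N2: "N \<ge> 2" "even N" using m1 ev N_def by presburger+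
  define B where "B = bernoulli_num N"
  define s :: real where "s = (-1) ^ m'"
  have pw: "(1 - x) / x * harm_geom_poly (n + 1) (- x) * geom_poly m (- x) = s * (H (Suc n) x * M m x)"
    if "x \<in> {0..1} - {0}" for x :: real
  proof -
    have x0: "x \<noteq> 0" using that by auto
    have r: "x * M m x = s * ((1 - x) * W m x)" using R1[of x m'] m' s_def by simp
    have "s * (H (Suc n) x * M m x) = s * H (Suc n) x * (x * M m x) / x" using x0 by simp
    also have "\<dots> = s * s * H (Suc n) x * ((1 - x) * W m x) / x" unfolding r by (simp add: mult_ac)
    also have "s * s = 1" by (simp add: s_def flip: power_add)
    finally show ?thesis by (simp add: harm_TP geom_TP)
  qed
  define Q where "Q = integral {0..1} (\<lambda>x. H (Suc n) x * M m x)"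
  have Qv: "Q = integral {0..1} (\<lambda>x. H (Suc n + m) x * M 0 x) + (\<Sum>i<m. integral {0..1} (\<lambda>x. x * W (Suc n + i) x * M (m - 1 - i) x))"
    unfolding Q_def by (rule Q_iter)
  have Q0: "integral {0..1} (\<lambda>x. H (Suc n + m) x * M 0 x) = - (real (Suc N) / 2) * B"
    using int_H[of N] by (simp add: N_def B_def)
  have terms: "integral {0..1} (\<lambda>x. x * W (Suc n + i) x * M (m - 1 - i) x) = (if i = m' then B else B / 2)"
    if "i < m" for i
  proof (cases "i = m'")
    case True
    then have "Suc n + i = N" "m - 1 - i = 0" using m' N_def by auto
    then show ?thesis using X0[of N] N2 True B_def by simp
  next
    case False
    then have "i < m'" using that m' by auto
    then have "Suc n + i + (m - 1 - i) = N" "m - 1 - i \<ge> 1" using m' N_def by auto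
    then show ?thesis using Xeven[of "Suc n + i" "m - 1 - i"] N2 False B_def by simp
  qed
  have "(\<Sum>i<m. integral {0..1} (\<lambda>x. x * W (Suc n + i) x * M (m - 1 - i) x)) = (\<Sum>i<m. (if i = m' then B else B / 2))"
    using terms by (intro sum.cong) auto
  also have "\<dots> = real m' * B / 2 + B"
  proof -
    have "(\<Sum>i<Suc m'. (if i = m' then B else B / 2)) = (\<Sum>i<m'. (if i = m' then B else B / 2)) + B"
      by simp
    also have "(\<Sum>i<m'. (if i = m' then B else B / 2)) = (\<Sum>i<m'. B / 2)"
      by (intro sum.cong) auto
    finally show ?thesis using m' by simp
  qed
  finally have S: "(\<Sum>i<m. integral {0..1} (\<lambda>x. x * W (Suc n + i) x * M (m - 1 - i) x)) = real m' * B / 2 + B" .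
  have Qval: "Q = - (real n / 2) * B"
    using Qv Q0 S m' N_def by (simp add: field_simps)
  have "((\<lambda>x. s * (H (Suc n) x * M m x)) has_integral (s * Q)) {0..1}"
    unfolding Q_def
    by (intro has_integral_mult_right integrable_integral integrable_continuous_interval continuous_intros)
  then have "((\<lambda>x::real. (1 - x) / x * harm_geom_poly (n + 1) (- x) * geom_poly m (- x)) has_integral (s * Q)) {0..1}"
    using has_integral_spike_finite_eq[of "{0}" "{0..1}" "\<lambda>x. s * (H (Suc n) x * M m x)"
        "\<lambda>x. (1 - x) / x * harm_geom_poly (n + 1) (- x) * geom_poly m (- x)"] pw by auto
  moreover have "s * Q = (-1) ^ n * (real n / 2) * bernoulli_num (n + m)"
  proof -
    have "(-1::real) ^ n = - s"
      using ev m' by (simp add: s_def minus_one_power_iff)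
    then show ?thesis using Qval by (simp add: B_def N_def)
  qed
  ultimately show "((\<lambda>x::real. (1 - x) / x * harm_geom_poly (n + 1) (- x) * geom_poly m (- x))
            has_integral ((-1) ^ n * (real n / 2) * bernoulli_num (n + m))) {0..1}" by simp
qed

end
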